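(* Let $\Gamma=(G,\sigma)$ be a signed graph with vertex set $V_G = V_1\sqcup V_2\sqcup V$, where $|V_1|=|V_2|=m\ge 1$ and $|V|=d$. Assume: (1) there is an integer $\ell$ such that $d^{\pm}_1(v)-d^{\pm}_2(v)=\ell$ for every $v\in V_1$ and $d^{\pm}_2(u)-d^{\pm}_1(u)=\ell$ for every $u\in V_2$; (2) every $v\in V$ satisfies one of: (a) $d^+_1(v)=m$ and $d^-_1(v)=d^+_2(v)=d^-_2(v)=0$, or the same with the roles of $V_1,V_2$ exchanged; (b) $d^-_1(v)=m$ and $d^+_1(v)=d^+_2(v)=d^-_2(v)=0$, or the same with the roles of $V_1,V_2$ exchanged; (c) $d^{\pm}_1(v)=d^{\pm}_2(v)$; (d) $d^+_1(v)=d^-_2(v)=m$, or the same with the roles of $V_1,V_2$ exchanged. Define $\Gamma'$ on the same vertex set by keeping all edges with both endpoints in $V_1\cup V_2$ or both in $V$, and, for each $v\in V$: in case (a), deleting the $m$ positive edges from $v$ to $V_1$ (resp. $V_2$) and joining $v$ by positive edges to all vertices of $V_2$ (resp. $V_1$); in case (b), deleting the $m$ negative edges from $v$ to $V_1$ (resp. $V_2$) and joining $v$ by negative edges to all vertices of $V_2$ (resp. $V_1$); in case (c), leaving the edges from $v$ unchanged; in case (d), reversing the sign of all $2m$ edges from $v$ to $V_1\cup V_2$ (so $v$ becomes joined negatively to the part it was joined to positively, and positively to the other). Then $\Gamma$ and $\Gamma'$ are cospectral.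
   Context: A signed graph $\Gamma=(G,\sigma)$ is a simple finite graph $G=(V_G,E_G)$ with a map $\sigma:E_G\to\{+1,-1\}$. Its adjacency matrix $A_\Gamma=(a_{uv})$ is the symmetric matrix with $a_{uv}=\sigma(uv)$ if $u,v$ are adjacent and $a_{uv}=0$ otherwise; two signed graphs are cospectral if their adjacency matrices have the same characteristic polynomial. For a vertex $v$ and $i\in\{1,2\}$, $d^+_i(v)$ (resp. $d^-_i(v)$) is the number of positive (resp. negative) edges joining $v$ to vertices of $V_i$, and $d^{\pm}_i(v)=d^+_i(v)-d^-_i(v)$. *)

theory Defs
  imports "Jordan_Normal_Form.Char_Poly"
begin

(* A signed graph on the vertex set {0..<n}: sg u v = sigma(uv) if uv is an edge,
   sg u v = 0 otherwise. *)
definition signed_graph :: "nat \<Rightarrow> (nat \<Rightarrow> nat \<Rightarrow> int) \<Rightarrow> bool" where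
  "signed_graph n sg \<longleftrightarrow>
     (\<forall>u v. sg u v \<in> {-1, 0, 1}) \<and> (\<forall>u v. sg u v = sg v u) \<and> (\<forall>u. sg u u = 0)
     \<and> (\<forall>u v. (u \<ge> n \<or> v \<ge> n) \<longrightarrow> sg u v = 0)"

definition adj_mat :: "nat \<Rightarrow> (nat \<Rightarrow> nat \<Rightarrow> int) \<Rightarrow> int mat" where
  "adj_mat n sg = mat n n (\<lambda>(i, j). sg i j)"

definition cospectral :: "nat \<Rightarrow> (nat \<Rightarrow> nat \<Rightarrow> int) \<Rightarrow> (nat \<Rightarrow> nat \<Rightarrow> int) \<Rightarrow> bool" where
  "cospectral n sg sg' \<longleftrightarrow> char_poly (adj_mat n sg) = char_poly (adj_mat n sg')"

definition dplus :: "nat set \<Rightarrow> (nat \<Rightarrow> nat \<Rightarrow> int) \<Rightarrow> nat \<Rightarrow> nat" where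
  "dplus S sg v = card {u \<in> S. sg v u = 1}"

definition dminus :: "nat set \<Rightarrow> (nat \<Rightarrow> nat \<Rightarrow> int) \<Rightarrow> nat \<Rightarrow> nat" where
  "dminus S sg v = card {u \<in> S. sg v u = -1}"

definition dpm :: "nat set \<Rightarrow> (nat \<Rightarrow> nat \<Rightarrow> int) \<Rightarrow> nat \<Rightarrow> int" where
  "dpm S sg v = int (dplus S sg v) - int (dminus S sg v)"

definition case_a :: "nat set \<Rightarrow> nat set \<Rightarrow> nat \<Rightarrow> (nat \<Rightarrow> nat \<Rightarrow> int) \<Rightarrow> nat \<Rightarrow> bool" where
  "case_a A B m sg v \<longleftrightarrow> dplus A sg v = m \<and> dminus A sg v = 0 \<and> dplus B sg v = 0 \<and> dminus B sg v = 0"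

definition case_b :: "nat set \<Rightarrow> nat set \<Rightarrow> nat \<Rightarrow> (nat \<Rightarrow> nat \<Rightarrow> int) \<Rightarrow> nat \<Rightarrow> bool" where
  "case_b A B m sg v \<longleftrightarrow> dminus A sg v = m \<and> dplus A sg v = 0 \<and> dplus B sg v = 0 \<and> dminus B sg v = 0"

definition case_c :: "nat set \<Rightarrow> nat set \<Rightarrow> (nat \<Rightarrow> nat \<Rightarrow> int) \<Rightarrow> nat \<Rightarrow> bool" where
  "case_c A B sg v \<longleftrightarrow> dpm A sg v = dpm B sg v"

definition case_d :: "nat set \<Rightarrow> nat set \<Rightarrow> nat \<Rightarrow> (nat \<Rightarrow> nat \<Rightarrow> int) \<Rightarrow> nat \<Rightarrow> bool" where
  "case_d A B m sg v \<longleftrightarrow> dplus A sg v = m \<and> dminus B sg v = m"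

end

theory Submission
  imports Defs
begin

lemma delta_sum: "(i::nat) < n \<Longrightarrow> (\<Sum>k = 0..<n. (if i = k then 1 else 0) * (g k::rat)) = g i"
proof -
  assume "i < n"
  have e: "(\<lambda>k. (if i = k then 1 else 0) * g k) = (\<lambda>k. if i = k then g k else 0)" by auto
  show ?thesis using \<open>i<n\<close> unfolding e by (simp add: sum.delta sum.delta')
qed
lemma delta_sum2: "(i::nat) < n \<Longrightarrow> (\<Sum>k = 0..<n. (g k::rat) * (if k = i then 1 else 0)) = g i"
proof -
  assume "i < n"
  have e: "(\<lambda>k. g k * (if k = i then 1 else 0)) = (\<lambda>k. if i = k then g k else 0)" by auto
  show ?thesis using \<open>i<n\<close> unfolding e by (simp add: sum.delta sum.delta')
qed
lemma sum_dpm: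
  assumes "finite S" "\<forall>u. sg v u \<in> {-1,0,1}"
  shows "(\<Sum>u\<in>S. sg v u) = dpm S sg v"
proof -
  have "(\<Sum>u\<in>S. sg v u) = (\<Sum>u\<in>S. (if sg v u = 1 then 1 else 0) - (if sg v u = -1 then 1 else 0))"
  proof (rule sum.cong)
    fix u show "sg v u = (if sg v u = 1 then 1 else 0) - (if sg v u = -1 then 1 else 0)"
      using assms(2)[rule_format, of u] by auto
  qed simp
  also have "\<dots> = int (card {u\<in>S. sg v u = 1}) - int (card {u\<in>S. sg v u = -1})"
    by (simp add: sum_subtractf sum.If_cases assms(1) Int_def)
  finally show ?thesis by (simp add: dpm_def dplus_def dminus_def)
qed

definition wv :: "nat set \<Rightarrow> nat set \<Rightarrow> nat \<Rightarrow> rat" where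
 "wv V1 V2 i = (if i \<in> V1 then 1 else if i \<in> V2 then -1 else 0)"

lemma wsum:
  assumes "V1 \<subseteq> {0..<n}" "V2 \<subseteq> {0..<n}" "V1 \<inter> V2 = {}"
  shows "(\<Sum>k = 0..<n. f k * wv V1 V2 k) = sum f V1 - sum f V2"
proof -
  have "(\<Sum>k = 0..<n. f k * wv V1 V2 k) = (\<Sum>k \<in> V1 \<union> V2. f k * wv V1 V2 k)"
    by (rule sum.mono_neutral_right) (use assms in \<open>auto simp: wv_def\<close>)
  also have "\<dots> = (\<Sum>k \<in> V1. f k * wv V1 V2 k) + (\<Sum>k \<in> V2. f k * wv V1 V2 k)"
    by (rule sum.union_disjoint) (use assms in \<open>auto intro: finite_subset\<close>)
  also have "(\<Sum>k \<in> V1. f k * wv V1 V2 k) = sum f V1" by (rule sum.cong) (auto simp: wv_def)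
  also have "(\<Sum>k \<in> V2. f k * wv V1 V2 k) = - sum f V2"
    unfolding sum_negf[symmetric] by (rule sum.cong) (use assms in \<open>auto simp: wv_def\<close>)
  finally show ?thesis by simp
qed

lemma all_of_card:
  assumes "finite S" "card {u\<in>S. P u} = card S" shows "\<forall>u\<in>S. P u"
proof -
  have "{u\<in>S. P u} = S" by (rule card_subset_eq) (use assms in auto)
  then show ?thesis by blast
qed

lemma none_of_card:
  assumes "finite S" "card {u\<in>S. P u} = 0" shows "\<forall>u\<in>S. \<not> P u"
  using assms by auto

theorem theorem5p1:
  fixes n m d :: nat and V1 V2 V :: "nat set" and sg sg' :: "nat \<Rightarrow> nat \<Rightarrow> int"
  assumes G: "signed_graph n sg"
    and part: "V1 \<union> V2 \<union> V = {0..<n}"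
    and disj: "V1 \<inter> V2 = {}" "V1 \<inter> V = {}" "V2 \<inter> V = {}"
    and card: "card V1 = m" "card V2 = m" "m \<ge> 1" "card V = d"
    and cond1: "\<exists>l::int. (\<forall>v\<in>V1. dpm V1 sg v - dpm V2 sg v = l)
                        \<and> (\<forall>u\<in>V2. dpm V2 sg u - dpm V1 sg u = l)"
    and cond2: "\<forall>v\<in>V. case_a V1 V2 m sg v \<or> case_a V2 V1 m sg v
                    \<or> case_b V1 V2 m sg v \<or> case_b V2 V1 m sg v
                    \<or> case_c V1 V2 sg v
                    \<or> case_d V1 V2 m sg v \<or> case_d V2 V1 m sg v"
    and G': "signed_graph n sg'"
    and keep12: "\<forall>u\<in>V1 \<union> V2. \<forall>w\<in>V1 \<union> V2. sg' u w = sg u w"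
    and keepV: "\<forall>u\<in>V. \<forall>w\<in>V. sg' u w = sg u w"
    and ra1: "\<forall>v\<in>V. case_a V1 V2 m sg v \<longrightarrow>
                 (\<forall>u\<in>V1. sg' v u = 0) \<and> (\<forall>u\<in>V2. sg' v u = 1)"
    and ra2: "\<forall>v\<in>V. case_a V2 V1 m sg v \<longrightarrow>
                 (\<forall>u\<in>V2. sg' v u = 0) \<and> (\<forall>u\<in>V1. sg' v u = 1)"
    and rb1: "\<forall>v\<in>V. case_b V1 V2 m sg v \<longrightarrow>
                 (\<forall>u\<in>V1. sg' v u = 0) \<and> (\<forall>u\<in>V2. sg' v u = -1)"
    and rb2: "\<forall>v\<in>V. case_b V2 V1 m sg v \<longrightarrow>
                 (\<forall>u\<in>V2. sg' v u = 0) \<and> (\<forall>u\<in>V1. sg' v u = -1)"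
    and rc: "\<forall>v\<in>V. case_c V1 V2 sg v \<longrightarrow> (\<forall>u\<in>V1 \<union> V2. sg' v u = sg v u)"
    and rd: "\<forall>v\<in>V. (case_d V1 V2 m sg v \<or> case_d V2 V1 m sg v) \<longrightarrow>
                 (\<forall>u\<in>V1 \<union> V2. sg' v u = - sg v u)"
  shows "cospectral n sg sg'"
proof -
  have vals: "\<forall>u. sg v u \<in> {-1,0,1}" for v using G unfolding signed_graph_def by auto
  have sym: "sg u v = sg v u" for u v using G unfolding signed_graph_def by auto
  have sym': "sg' u v = sg' v u" for u v using G' unfolding signed_graph_def by auto
  have sub1: "V1 \<subseteq> {0..<n}" and sub2: "V2 \<subseteq> {0..<n}" and subV: "V \<subseteq> {0..<n}" using part by auto
  have fin1: "finite V1" and fin2: "finite V2" using sub1 sub2 finite_subset by auto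
  obtain l :: int where l1: "\<forall>v\<in>V1. dpm V1 sg v - dpm V2 sg v = l"
    and l2: "\<forall>u\<in>V2. dpm V2 sg u - dpm V1 sg u = l" using cond1 by blast
  define w where "w = wv V1 V2"
  define c where "c = (\<lambda>i. of_int (sum (sg i) V1 - sum (sg i) V2) :: rat)"
  define M where "M = (of_nat m :: rat)"
  have M0: "M \<noteq> 0" using card(3) by (simp add: M_def)
  have cdpm: "c i = of_int (dpm V1 sg i - dpm V2 sg i)" for i
  proof -
    have h1: "sum (sg i) V1 = dpm V1 sg i" by (rule sum_dpm[OF fin1 vals])
    have h2: "sum (sg i) V2 = dpm V2 sg i" by (rule sum_dpm[OF fin2 vals])
    show ?thesis unfolding c_def h1 h2 ..
  qed
  have cw12: "c i = of_int l * w i" if "i \<in> V1 \<union> V2" for i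
  proof -
    have "i \<notin> V1 \<or> i \<notin> V2" using disj(1) by blast
    then show ?thesis using that l1 l2 unfolding cdpm w_def wv_def by auto
  qed
  have w0: "w i = 0" if "i \<notin> V1 \<union> V2" for i using that by (simp add: w_def wv_def)
  have sumw1: "sum w V1 = M" by (simp add: w_def wv_def M_def card(1))
  have sumw2: "sum w V2 = - M"
  proof -
    have "sum w V2 = sum (\<lambda>_. -1) V2" by (rule sum.cong) (use disj(1) in \<open>auto simp: w_def wv_def\<close>)
    then show ?thesis by (simp add: M_def card(2))
  qed
  have ww: "(\<Sum>k = 0..<n. w k * w k) = 2 * M"
    using wsum[OF sub1 sub2 disj(1), of w] sumw1 sumw2 by (simp add: w_def)
  have cw: "(\<Sum>k = 0..<n. c k * w k) = 2 * M * of_int l"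
  proof -
    have "sum c V1 = sum (\<lambda>_. of_int l * 1) V1"
      by (rule sum.cong) (auto simp: cw12 w_def wv_def)
    moreover have "sum c V2 = sum (\<lambda>_. of_int l * (-1)) V2"
      by (rule sum.cong) (use disj(1) in \<open>auto simp: cw12 w_def wv_def\<close>)
    ultimately show ?thesis using wsum[OF sub1 sub2 disj(1), of c]
      by (simp add: w_def M_def card)
  qed
  have Aw: "(\<Sum>k = 0..<n. of_int (sg i k) * w k) = c i" for i
    using wsum[OF sub1 sub2 disj(1), of "\<lambda>k. of_int (sg i k)"] by (simp add: w_def c_def)
  have wA: "(\<Sum>k = 0..<n. w k * of_int (sg k j)) = c j" for j
    using Aw[of j] by (simp add: sym[of _ j] mult.commute)
  have rowV: "of_int (sg' i j) = of_int (sg i j) - c i * w j / M" if i: "i \<in> V" and j: "j \<in> V1 \<union> V2" for i j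
  proof -
    have cconst: "c i = M * of_int a - M * of_int b"
      if "\<forall>u\<in>V1. sg i u = a" "\<forall>u\<in>V2. sg i u = b" for a b
    proof -
      have "sum (sg i) V1 = sum (\<lambda>_. a) V1" "sum (sg i) V2 = sum (\<lambda>_. b) V2"
        using that by (auto intro: sum.cong)
      then have h: "sum (sg i) V1 - sum (sg i) V2 = int m * a - int m * b" by (simp add: card)
      show ?thesis unfolding c_def h M_def by simp
    qed
    have zero: "\<forall>u\<in>S. sg i u = 0" if "finite S" "dplus S sg i = 0" "dminus S sg i = 0" for S
    proof
      fix u assume u: "u \<in> S"
      have "sg i u \<noteq> 1" "sg i u \<noteq> -1"
        using none_of_card[OF that(1), of "\<lambda>u. sg i u = 1"] none_of_card[OF that(1), of "\<lambda>u. sg i u = -1"]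
          that(2,3) u unfolding dplus_def dminus_def by auto
      then show "sg i u = 0" using vals[of i] by auto
    qed
    have all1: "\<forall>u\<in>V1. P u" if "card {u\<in>V1. P u} = m" for P
      using all_of_card[OF fin1] that card(1) by auto
    have all2: "\<forall>u\<in>V2. P u" if "card {u\<in>V2. P u} = m" for P
      using all_of_card[OF fin2] that card(2) by auto
    have jj: "(j \<in> V1 \<and> j \<notin> V2 \<and> w j = 1) \<or> (j \<in> V2 \<and> j \<notin> V1 \<and> w j = -1)"
      using j disj(1) by (auto simp: w_def wv_def)
    from cond2 i consider "case_a V1 V2 m sg i" | "case_a V2 V1 m sg i" | "case_b V1 V2 m sg i"
      | "case_b V2 V1 m sg i" | "case_c V1 V2 sg i" | "case_d V1 V2 m sg i" | "case_d V2 V1 m sg i"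
      by blast
    then show ?thesis
    proof cases
      case 1
      then have a: "\<forall>u\<in>V1. sg i u = 1" "\<forall>u\<in>V2. sg i u = 0"
        using all1[of "\<lambda>u. sg i u = 1"] zero[OF fin2] 1 unfolding case_a_def dplus_def by blast+
      have ci: "c i = M" using cconst[OF a] by simp
      have s: "\<forall>u\<in>V1. sg' i u = 0" "\<forall>u\<in>V2. sg' i u = 1" using ra1 i 1 by blast+
      show ?thesis using jj by (elim disjE conjE; simp add: ci a s M0)
    next
      case 2
      then have a: "\<forall>u\<in>V1. sg i u = 0" "\<forall>u\<in>V2. sg i u = 1"
        using all2[of "\<lambda>u. sg i u = 1"] zero[OF fin1] 2 unfolding case_a_def dplus_def by blast+
      have ci: "c i = - M" using cconst[OF a] by simp
      have s: "\<forall>u\<in>V1. sg' i u = 1" "\<forall>u\<in>V2. sg' i u = 0" using ra2 i 2 by blast+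
      show ?thesis using jj by (elim disjE conjE; simp add: ci a s M0)
    next
      case 3
      then have a: "\<forall>u\<in>V1. sg i u = -1" "\<forall>u\<in>V2. sg i u = 0"
        using all1[of "\<lambda>u. sg i u = -1"] zero[OF fin2] 3 unfolding case_b_def dminus_def by blast+
      have ci: "c i = - M" using cconst[OF a] by simp
      have s: "\<forall>u\<in>V1. sg' i u = 0" "\<forall>u\<in>V2. sg' i u = -1" using rb1 i 3 by blast+
      show ?thesis using jj by (elim disjE conjE; simp add: ci a s M0)
    next
      case 4
      then have a: "\<forall>u\<in>V1. sg i u = 0" "\<forall>u\<in>V2. sg i u = -1"
        using all2[of "\<lambda>u. sg i u = -1"] zero[OF fin1] 4 unfolding case_b_def dminus_def by blast+
      have ci: "c i = M" using cconst[OF a] by simp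
      have s: "\<forall>u\<in>V1. sg' i u = -1" "\<forall>u\<in>V2. sg' i u = 0" using rb2 i 4 by blast+
      show ?thesis using jj by (elim disjE conjE; simp add: ci a s M0)
    next
      case 5
      then have "c i = 0" unfolding cdpm case_c_def by simp
      then show ?thesis using rc i 5 j by simp
    next
      case 6
      then have a: "\<forall>u\<in>V1. sg i u = 1" "\<forall>u\<in>V2. sg i u = -1"
        using all1[of "\<lambda>u. sg i u = 1"] all2[of "\<lambda>u. sg i u = -1"] 6 unfolding case_d_def dplus_def dminus_def by blast+
      have ci: "c i = 2 * M" using cconst[OF a] by simp
      have s: "\<forall>u\<in>V1 \<union> V2. sg' i u = - sg i u" using rd i 6 by blast
      show ?thesis using jj by (elim disjE conjE; simp add: ci a s M0)
    next
      case 7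
      then have a: "\<forall>u\<in>V1. sg i u = -1" "\<forall>u\<in>V2. sg i u = 1"
        using all1[of "\<lambda>u. sg i u = -1"] all2[of "\<lambda>u. sg i u = 1"] 7 unfolding case_d_def dplus_def dminus_def by blast+
      have ci: "c i = - 2 * M" using cconst[OF a] by simp
      have s: "\<forall>u\<in>V1 \<union> V2. sg' i u = - sg i u" using rd i 7 by blast
      show ?thesis using jj by (elim disjE conjE; simp add: ci a s M0)
    qed
  qed
  define A where "A = map_mat (of_int :: int \<Rightarrow> rat) (adj_mat n sg)"
  define A' where "A' = map_mat (of_int :: int \<Rightarrow> rat) (adj_mat n sg')"
  define Q where "Q = (mat n n (\<lambda>(i,j). (if i = j then 1 else 0) - w i * w j / M) :: rat mat)"
  have carr: "A \<in> carrier_mat n n" "A' \<in> carrier_mat n n" "Q \<in> carrier_mat n n"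
    by (auto simp: A_def A'_def Q_def adj_mat_def)
  have QQ: "Q * Q = 1\<^sub>m n"
  proof (rule eq_matI)
    fix i j assume "i < dim_row (1\<^sub>m n)" "j < dim_col (1\<^sub>m n)"
    then have ij: "i < n" "j < n" by auto
    have "(Q * Q) $$ (i, j) = (\<Sum>k = 0..<n. ((if i = k then 1 else 0) - w i * w k / M) * ((if k = j then 1 else 0) - w k * w j / M))"
      using ij by (simp add: Q_def scalar_prod_def)
    also have "\<dots> = (\<Sum>k = 0..<n. (if i = k then 1 else 0) * ((if k = j then 1 else 0) - w k * w j / M))
        - (w i / M) * (\<Sum>k = 0..<n. w k * (if k = j then 1 else 0)) + (w i * w j / (M * M)) * (\<Sum>k = 0..<n. w k * w k)"
      by (simp add: algebra_simps sum_subtractf sum.distrib sum_distrib_left sum_divide_distrib)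
    also have "\<dots> = (if i = j then 1 else 0) - w i * w j / M - w i * w j / M + (w i * w j / (M * M)) * (2 * M)"
      using ij by (simp add: delta_sum delta_sum2 ww)
    also have "\<dots> = 1\<^sub>m n $$ (i, j)" using ij M0 by (simp add: field_simps)
    finally show "(Q * Q) $$ (i, j) = 1\<^sub>m n $$ (i, j)" .
  qed (auto simp: Q_def)
  have QA: "(Q * A) $$ (i, k) = of_int (sg i k) - w i * c k / M" if "i < n" "k < n" for i k
  proof -
    have "(Q * A) $$ (i, k) = (\<Sum>j = 0..<n. ((if i = j then 1 else 0) - w i * w j / M) * of_int (sg j k))"
      using that by (simp add: Q_def A_def adj_mat_def scalar_prod_def)
    also have "\<dots> = (\<Sum>j = 0..<n. (if i = j then 1 else 0) * of_int (sg j k)) - (w i / M) * (\<Sum>j = 0..<n. w j * of_int (sg j k))"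
      by (simp add: algebra_simps sum_subtractf sum_distrib_left sum_divide_distrib)
    also have "\<dots> = of_int (sg i k) - w i * c k / M"
      using that by (simp add: delta_sum wA)
    finally show ?thesis .
  qed
  have QAQ: "A' = Q * A * Q"
  proof (rule eq_matI)
    fix i j assume "i < dim_row (Q * A * Q)" "j < dim_col (Q * A * Q)"
    then have ij: "i < n" "j < n" using carr by auto
    have "(Q * A * Q) $$ (i, j) = (\<Sum>k = 0..<n. (of_int (sg i k) - w i * c k / M) * ((if k = j then 1 else 0) - w k * w j / M))"
    proof -
      have QAc: "Q * A \<in> carrier_mat n n" using carr by auto
      have "(Q * A * Q) $$ (i, j) = row (Q * A) i \<bullet> col Q j"
        by (rule index_mult_mat) (use ij carr QAc in auto)
      also have "\<dots> = (\<Sum>k = 0..<n. (Q * A) $$ (i, k) * Q $$ (k, j))"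
        unfolding scalar_prod_def
      proof (rule sum.cong)
        show "{0..<dim_vec (col Q j)} = {0..<n}" using carr by simp
        fix k assume "k \<in> {0..<n}"
        then have k: "k < n" by simp
        have "row (Q * A) i $ k = (Q * A) $$ (i, k)" by (rule index_row) (use ij k QAc in auto)
        moreover have "col Q j $ k = Q $$ (k, j)" by (rule index_col) (use ij k carr in auto)
        ultimately show "row (Q * A) i $ k * col Q j $ k = (Q * A) $$ (i, k) * Q $$ (k, j)" by simp
      qed
      also have "\<dots> = (\<Sum>k = 0..<n. (of_int (sg i k) - w i * c k / M) * ((if k = j then 1 else 0) - w k * w j / M))"
      proof (rule sum.cong)
        fix k assume "k \<in> {0..<n}"
        then have k: "k < n" by simp
        have "Q $$ (k, j) = (if k = j then 1 else 0) - w k * w j / M" using k ij by (simp add: Q_def)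
        then show "(Q * A) $$ (i, k) * Q $$ (k, j) = (of_int (sg i k) - w i * c k / M) * ((if k = j then 1 else 0) - w k * w j / M)"
          using QA[OF ij(1) k] by simp
      qed simp
      finally show ?thesis .
    qed
    also have "\<dots> = (\<Sum>k = 0..<n. of_int (sg i k) * (if k = j then 1 else 0))
        - (w j / M) * (\<Sum>k = 0..<n. of_int (sg i k) * w k)
        - (w i / M) * (\<Sum>k = 0..<n. c k * (if k = j then 1 else 0))
        + (w i * w j / (M * M)) * (\<Sum>k = 0..<n. c k * w k)"
      by (simp add: algebra_simps sum_subtractf sum.distrib sum_distrib_left sum_divide_distrib)
    also have "\<dots> = of_int (sg i j) - w j * c i / M - w i * c j / M + (w i * w j / (M * M)) * (2 * M * of_int l)"
      using ij by (simp add: delta_sum2 Aw cw)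
    also have "\<dots> = of_int (sg' i j)"
    proof -
      have ii: "i \<in> V1 \<union> V2 \<or> i \<in> V" and jj: "j \<in> V1 \<union> V2 \<or> j \<in> V" using ij part by auto
      have wiV: "w k = 0" if "k \<in> V" for k using w0 that disj by blast
      show ?thesis
      proof (cases "i \<in> V1 \<union> V2")
        case True note iT = True
        show ?thesis
        proof (cases "j \<in> V1 \<union> V2")
          case True
          then show ?thesis using iT keep12 cw12[OF iT] cw12[OF True] M0
            by (simp add: field_simps)
        next
          case False
          then have jV: "j \<in> V" using jj by blast
          have "of_int (sg' i j) = (of_int (sg' j i) :: rat)" by (simp add: sym')
          also have "\<dots> = of_int (sg j i) - c j * w i / M" by (rule rowV[OF jV iT])
          finally show ?thesis using wiV[OF jV] by (simp add: sym[of i j])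
        qed
      next
        case False
        then have iV: "i \<in> V" using ii by blast
        show ?thesis
        proof (cases "j \<in> V1 \<union> V2")
          case True
          show ?thesis using rowV[OF iV True] wiV[OF iV] by simp
        next
          case False
          then have jV: "j \<in> V" using jj by blast
          show ?thesis using wiV[OF iV] wiV[OF jV] keepV iV jV by simp
        qed
      qed
    qed
    also have "\<dots> = A' $$ (i, j)" using ij by (simp add: A'_def adj_mat_def)
    finally show "A' $$ (i, j) = (Q * A * Q) $$ (i, j)" by simp
  qed (use carr in \<open>auto simp: Q_def A_def A'_def adj_mat_def\<close>)
  have "similar_mat A' A"
    unfolding similar_mat_def by (rule exI[of _ Q], rule exI[of _ Q], rule similar_mat_witI[OF QQ QQ QAQ]) (use carr in auto)
  then have "char_poly A' = char_poly A" by (rule char_poly_similar)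
  moreover have "char_poly A' = (of_int_poly (char_poly (adj_mat n sg')) :: rat poly)"
    unfolding A'_def by (rule of_int_hom.char_poly_hom[where n=n]) (simp add: adj_mat_def)
  moreover have "char_poly A = (of_int_poly (char_poly (adj_mat n sg)) :: rat poly)"
    unfolding A_def by (rule of_int_hom.char_poly_hom[where n=n]) (simp add: adj_mat_def)
  ultimately have "(of_int_poly (char_poly (adj_mat n sg')) :: rat poly) = of_int_poly (char_poly (adj_mat n sg))"
    by simp
  then have "char_poly (adj_mat n sg') = char_poly (adj_mat n sg)" by (rule of_int_poly_hom.injectivity)
  then show ?thesis unfolding cospectral_def by simp
qed

end
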